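(* Let $\Gamma$ be a metrized graph with $4$ vertices. Then $$3\,y(\Gamma) \leq Kf(\Gamma) \leq 4\, y(\Gamma).$$
   Context: A metrized graph $\Gamma$ is a finite connected graph (multiple edges and self-loops allowed) each of whose edges is identified with a closed segment of positive length, with a finite nonempty vertex set $V(\Gamma)$ containing every point of valence $\neq2$; $L_i$ is the length of $e_i$, $r$ the effective resistance (edges as resistors of resistance equal to length). $Kf(\Gamma)=\frac12\sum_{p,q\in V(\Gamma)}r(p,q)$. For an edge $e_i$ with end points $p_i,q_i$: if $\Gamma-e_i$ (interior deleted) is connected, $R_i$ is the effective resistance between $p_i,q_i$ in $\Gamma-e_i$, $R_{a_i,p}=\hat j_{p_i}(p,q_i)$, $R_{b_i,p}=\hat j_{q_i}(p,p_i)$ with $\hat j_z(x,y)$ the voltage function of $\Gamma-e_i$ (potential at $x$ when unit current enters at $y$ and exits at $z$, potential $0$ at $z$); if $e_i$ is a bridge, $R_{a_i,p}=0,R_{b_i,p}=R_i$ for $p$ in the component of $\Gamma-e_i$ containing $p_i$ and $R_{a_i,p}=R_i,R_{b_i,p}=0$ otherwise, with every expression in $R_i$ interpreted as its limit as $R_i\to\infty$; for a self-loop $R_i=0$. For a fixed vertex $p$ (independent of choice), $y(\Gamma)=\frac14\sum_{e_i}\frac{L_iR_i^2}{(L_i+R_i)^2}+\frac34\sum_{e_i}\frac{L_i(R_{a_i,p}-R_{b_i,p})^2}{(L_i+R_i)^2}$. *)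

theory Defs
  imports Complex_Main
begin

text \<open>A metrized graph with vertex set V is modelled by a list of edges; edge i is a
  triple (p_i, q_i, L_i): end points p_i, q_i (possibly equal: self-loop) and length L_i > 0.
  Multiple edges are allowed (the list may repeat end point pairs).\<close>

type_synonym 'v medges = "('v \<times> 'v \<times> real) list"

definition adj :: "'v medges \<Rightarrow> 'v \<Rightarrow> 'v \<Rightarrow> bool" where
  "adj E x y \<longleftrightarrow> (\<exists>(a, b, l) \<in> set E. (a = x \<and> b = y) \<or> (a = y \<and> b = x))"

definition graph_connected :: "'v set \<Rightarrow> 'v medges \<Rightarrow> bool" where
  "graph_connected V E \<longleftrightarrow> (\<forall>x\<in>V. \<forall>y\<in>V. (adj E)\<^sup>*\<^sup>* x y)"

definition metrized_graph :: "'v set \<Rightarrow> 'v medges \<Rightarrow> bool" where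
  "metrized_graph V E \<longleftrightarrow> finite V \<and> V \<noteq> {} \<and>
     (\<forall>(a, b, l) \<in> set E. a \<in> V \<and> b \<in> V \<and> l > 0) \<and> graph_connected V E"

definition del_edge :: "'v medges \<Rightarrow> nat \<Rightarrow> 'v medges" where
  "del_edge E i = take i E @ drop (Suc i) E"

text \<open>Net current flowing out of vertex v into the edges (edges as resistors of
  resistance equal to their length) under the potential phi.\<close>
definition outflow :: "'v medges \<Rightarrow> ('v \<Rightarrow> real) \<Rightarrow> 'v \<Rightarrow> real" where
  "outflow E phi v = sum_list (map (\<lambda>(a, b, l).
      (if a = v then (phi v - phi b) / l else 0) + (if b = v then (phi v - phi a) / l else 0)) E)"

text \<open>phi is the potential when unit current enters at y and exits at z, with potential 0 at z.\<close>
definition is_potential :: "'v set \<Rightarrow> 'v medges \<Rightarrow> 'v \<Rightarrow> 'v \<Rightarrow> ('v \<Rightarrow> real) \<Rightarrow> bool" where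
  "is_potential V E z y phi \<longleftrightarrow> phi z = 0 \<and> (\<forall>v. v \<notin> V \<longrightarrow> phi v = 0) \<and>
     (\<forall>v\<in>V. outflow E phi v = (if v = y then 1 else 0) - (if v = z then 1 else 0))"

text \<open>Voltage function j_z(x,y): potential at x when unit current enters at y and exits at z.\<close>
definition voltage :: "'v set \<Rightarrow> 'v medges \<Rightarrow> 'v \<Rightarrow> 'v \<Rightarrow> 'v \<Rightarrow> real" where
  "voltage V E z x y = (THE phi. is_potential V E z y phi) x"

definition eff_res :: "'v set \<Rightarrow> 'v medges \<Rightarrow> 'v \<Rightarrow> 'v \<Rightarrow> real" where
  "eff_res V E x y = voltage V E y x x"

definition Kf :: "'v set \<Rightarrow> 'v medges \<Rightarrow> real" where
  "Kf V E = (1/2) * (\<Sum>p\<in>V. \<Sum>q\<in>V. eff_res V E p q)"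

definition elen :: "'v medges \<Rightarrow> nat \<Rightarrow> real" where
  "elen E i = snd (snd (E ! i))"

definition ep :: "'v medges \<Rightarrow> nat \<Rightarrow> 'v" where
  "ep E i = fst (E ! i)"

definition eq :: "'v medges \<Rightarrow> nat \<Rightarrow> 'v" where
  "eq E i = fst (snd (E ! i))"

definition R_i :: "'v set \<Rightarrow> 'v medges \<Rightarrow> nat \<Rightarrow> real" where
  "R_i V E i = eff_res V (del_edge E i) (ep E i) (eq E i)"

definition R_a :: "'v set \<Rightarrow> 'v medges \<Rightarrow> nat \<Rightarrow> 'v \<Rightarrow> real" where
  "R_a V E i p = voltage V (del_edge E i) (ep E i) p (eq E i)"

definition R_b :: "'v set \<Rightarrow> 'v medges \<Rightarrow> nat \<Rightarrow> 'v \<Rightarrow> real" where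
  "R_b V E i p = voltage V (del_edge E i) (eq E i) p (ep E i)"

text \<open>Edge terms; for a bridge (Gamma - e_i disconnected) the expressions are replaced by their
  limits as R_i tends to infinity (in both terms (R_a - R_b)^2 = R_i^2 for a bridge).\<close>
definition yterm1 :: "'v set \<Rightarrow> 'v medges \<Rightarrow> nat \<Rightarrow> real" where
  "yterm1 V E i = (let L = elen E i in
     if graph_connected V (del_edge E i)
     then L * (R_i V E i)\<^sup>2 / (L + R_i V E i)\<^sup>2
     else Lim at_top (\<lambda>R. L * R\<^sup>2 / (L + R)\<^sup>2))"

definition yterm2 :: "'v set \<Rightarrow> 'v medges \<Rightarrow> 'v \<Rightarrow> nat \<Rightarrow> real" where
  "yterm2 V E p i = (let L = elen E i in
     if graph_connected V (del_edge E i)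
     then L * (R_a V E i p - R_b V E i p)\<^sup>2 / (L + R_i V E i)\<^sup>2
     else Lim at_top (\<lambda>R. L * R\<^sup>2 / (L + R)\<^sup>2))"

definition y_inv :: "'v set \<Rightarrow> 'v medges \<Rightarrow> 'v \<Rightarrow> real" where
  "y_inv V E p = (1/4) * (\<Sum>i<length E. yterm1 V E i) + (3/4) * (\<Sum>i<length E. yterm2 V E p i)"

end

theory Submission
  imports Defs "HOL-Real_Asymp.Real_Asymp"
begin

definition edges_in :: "'v set \<Rightarrow> 'v medges \<Rightarrow> bool" where
  "edges_in V E \<longleftrightarrow> (\<forall>(a, b, l) \<in> set E. a \<in> V \<and> b \<in> V \<and> l > 0)"

lemma outflow_Nil[simp]: "outflow [] phi v = 0"
  by (simp add: outflow_def)

lemma outflow_Cons[simp]: "outflow ((a,b,l) # E) phi v =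
   (if a = v then (phi v - phi b) / l else 0) + (if b = v then (phi v - phi a) / l else 0) + outflow E phi v"
  by (simp add: outflow_def)

lemma outflow_append: "outflow (E1 @ E2) phi v = outflow E1 phi v + outflow E2 phi v"
  by (simp add: outflow_def)

lemma div_diff_help: "((x::real) - y - (z - w)) / l = (x - z) / l - (y - w) / l"
  by (simp add: diff_divide_distrib)

lemma outflow_diff: "outflow E (\<lambda>x. f x - g x) v = outflow E f v - outflow E g v"
proof (induction E)
  case (Cons e E) then show ?case by (cases e) (simp add: div_diff_help)
qed simp

lemma outflow_lin: "outflow E (\<lambda>x. s * f x + t) v = s * outflow E f v"
  by (induction E) (auto simp: diff_divide_distrib algebra_simps)

lemma outflow_cong: "edges_in V E \<Longrightarrow> v \<in> V \<Longrightarrow> (\<And>x. x \<in> V \<Longrightarrow> f x = g x) \<Longrightarrow> outflow E f v = outflow E g v"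
  by (induction E) (auto simp: edges_in_def)

lemma energy:
  assumes "finite V" "edges_in V E"
  shows "(\<Sum>v\<in>V. phi v * outflow E phi v) = sum_list (map (\<lambda>(a,b,l). (phi a - phi b)^2 / l) E)"
  using assms(2)
proof (induction E)
  case Nil then show ?case by simp
next
  case (Cons e E)
  obtain a b l where e: "e = (a,b,l)" by (cases e) auto
  have ab: "a \<in> V" "b \<in> V" using Cons.prems e by (auto simp: edges_in_def)
  have IH: "(\<Sum>v\<in>V. phi v * outflow E phi v) = sum_list (map (\<lambda>(a,b,l). (phi a - phi b)^2 / l) E)"
    using Cons by (auto simp: edges_in_def)
  have "(\<Sum>v\<in>V. phi v * outflow (e # E) phi v) =
     (\<Sum>v\<in>V. (if a = v then phi v * (phi v - phi b) / l else 0)) +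
     (\<Sum>v\<in>V. (if b = v then phi v * (phi v - phi a) / l else 0)) +
     (\<Sum>v\<in>V. phi v * outflow E phi v)"
  proof -
    have "phi v * outflow (e # E) phi v = (if a = v then phi v * (phi v - phi b) / l else 0) +
      (if b = v then phi v * (phi v - phi a) / l else 0) + phi v * outflow E phi v" for v
      unfolding e by (simp add: algebra_simps)
    then show ?thesis by (simp add: sum.distrib)
  qed
  also have "\<dots> = phi a * (phi a - phi b) / l + phi b * (phi b - phi a) / l + (\<Sum>v\<in>V. phi v * outflow E phi v)"
    using ab assms(1) by simp
  also have "\<dots> = (phi a - phi b)^2 / l + (\<Sum>v\<in>V. phi v * outflow E phi v)"
    by (simp add: power2_eq_square diff_divide_distrib add_divide_distrib algebra_simps)
  finally show ?case using IH e by simp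
qed

lemma sum_list_nonneg_zero:
  assumes "\<forall>x\<in>set xs. (0::real) \<le> f x" "sum_list (map f xs) = 0"
  shows "\<forall>x\<in>set xs. f x = 0"
  using assms
proof (induction xs)
  case Nil then show ?case by simp
next
  case (Cons a xs)
  have "0 \<le> sum_list (map f xs)" using Cons.prems by (intro sum_list_nonneg) auto
  then show ?case using Cons by auto
qed

lemma harmonic_zero:
  assumes "finite V" "edges_in V E" "graph_connected V E" "z \<in> V" "psi z = 0"
    "\<forall>v\<in>V. outflow E psi v = 0"
  shows "\<forall>x\<in>V. psi x = 0"
proof -
  have "(\<Sum>v\<in>V. psi v * outflow E psi v) = 0" using assms(6) by simp
  then have s0: "sum_list (map (\<lambda>(a,b,l). (psi a - psi b)^2 / l) E) = 0"
    using energy[OF assms(1,2)] by simp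
  have "\<forall>x\<in>set E. 0 \<le> (\<lambda>(a,b,l). (psi a - psi b)^2 / l) x"
    using assms(2) by (auto simp: edges_in_def)
  from sum_list_nonneg_zero[OF this s0]
  have e0: "\<forall>(a,b,l)\<in>set E. psi a = psi b"
    using assms(2) by (fastforce simp: edges_in_def)
  have adjeq: "adj E x y \<Longrightarrow> psi x = psi y" for x y
    using e0 unfolding adj_def by fastforce
  have "(adj E)\<^sup>*\<^sup>* z x \<Longrightarrow> psi x = psi z" for x
    by (induction rule: rtranclp_induct) (auto dest: adjeq)
  then show ?thesis using assms(3,4,5) unfolding graph_connected_def by metis
qed

lemma potential_unique:
  assumes "finite V" "edges_in V E" "graph_connected V E" "z \<in> V"
    "is_potential V E z y f" "is_potential V E z y g"
  shows "f = g"
proof -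
  have "\<forall>x\<in>V. f x - g x = 0"
    by (rule harmonic_zero[OF assms(1-4)]) (use assms(5,6) in \<open>auto simp: is_potential_def outflow_diff\<close>)
  then show ?thesis using assms(5,6) unfolding is_potential_def by fastforce
qed

lemma voltage_eq:
  assumes "finite V" "edges_in V E" "graph_connected V E" "z \<in> V"
    "is_potential V E z y f"
  shows "voltage V E z x y = f x"
proof -
  have "(THE phi. is_potential V E z y phi) = f"
    proof (rule the_equality)
    show "is_potential V E z y f" by (rule assms(5))
    fix phi assume "is_potential V E z y phi"
    then show "phi = f" by (rule potential_unique[OF assms(1-4) _ assms(5)])
  qed
  then show ?thesis by (simp add: voltage_def)
qed

definition cond :: "'v medges \<Rightarrow> 'v \<Rightarrow> 'v \<Rightarrow> real" where
  "cond E x y = sum_list (map (\<lambda>(a,b,l). if (a = x \<and> b = y) \<or> (a = y \<and> b = x) then 1 / l else 0) E)"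

lemma cond_Nil[simp]: "cond [] x y = 0" by (simp add: cond_def)
lemma cond_Cons[simp]: "cond ((a,b,l) # E) x y = (if (a = x \<and> b = y) \<or> (a = y \<and> b = x) then 1 / l else 0) + cond E x y"
  by (simp add: cond_def)

lemma cond_sym: "cond E x y = cond E y x"
  unfolding cond_def by (rule arg_cong[where f=sum_list]) (auto intro!: map_cong)

lemma cond_nonneg: "edges_in V E \<Longrightarrow> 0 \<le> cond E x y"
  by (induction E) (auto simp: edges_in_def)

lemma cond_pos: assumes "edges_in V E" "(a,b,l) \<in> set E" "(a = x \<and> b = y) \<or> (a = y \<and> b = x)"
  shows "0 < cond E x y"
proof -
  have l: "l > 0" using assms by (auto simp: edges_in_def)
  let ?f = "\<lambda>(a,b,l). if (a = x \<and> b = y) \<or> (a = y \<and> b = x) then 1 / l else (0::real)"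
  have mem: "?f (a,b,l) \<in> set (map ?f E)" by (simp only: set_map) (rule imageI[OF assms(2)])
  have "?f (a,b,l) \<le> sum_list (map ?f E)"
    by (rule member_le_sum_list[OF mem]) (use assms(1) in \<open>auto simp: edges_in_def\<close>)
  moreover have "0 < ?f (a,b,l)" using assms(3) l by auto
  ultimately show ?thesis unfolding cond_def by linarith
qed

lemma edge_term4:
  fixes phi :: "'v \<Rightarrow> real" and l :: real
  assumes "x \<in> {A,B,C,D}" "y \<in> {A,B,C,D}" "v \<in> {A,B,C,D}" "distinct [A,B,C,D]"
  shows "(if x = v then (phi v - phi y) / l else 0) + (if y = v then (phi v - phi x) / l else 0) =
    (if (x = v \<and> y = A) \<or> (x = A \<and> y = v) then 1 / l else 0) * (phi v - phi A) +
    (if (x = v \<and> y = B) \<or> (x = B \<and> y = v) then 1 / l else 0) * (phi v - phi B) +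
    (if (x = v \<and> y = C) \<or> (x = C \<and> y = v) then 1 / l else 0) * (phi v - phi C) +
    (if (x = v \<and> y = D) \<or> (x = D \<and> y = v) then 1 / l else 0) * (phi v - phi D)"
  using assms by auto

lemma outflow4:
  fixes phi :: "'v \<Rightarrow> real"
  assumes "edges_in V E" "V = {A,B,C,D}" "distinct [A,B,C,D]" "v \<in> V"
  shows "outflow E phi v = cond E v A * (phi v - phi A) + cond E v B * (phi v - phi B) +
     cond E v C * (phi v - phi C) + cond E v D * (phi v - phi D)"
  using assms(1)
proof (induction E)
  case Nil then show ?case by simp
next
  case (Cons e E)
  obtain x y l where e: "e = (x,y,l)" by (cases e) auto
  have xy: "x \<in> {A,B,C,D}" "y \<in> {A,B,C,D}" using Cons.prems e assms(2) by (auto simp: edges_in_def)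
  have IH: "outflow E phi v = cond E v A * (phi v - phi A) + cond E v B * (phi v - phi B) +
     cond E v C * (phi v - phi C) + cond E v D * (phi v - phi D)"
    using Cons by (auto simp: edges_in_def)
  show ?case unfolding e outflow_Cons cond_Cons IH edge_term4[OF xy assms(4)[unfolded assms(2)] assms(3)]
    by (simp add: algebra_simps)
qed

lemma cut:
  assumes "edges_in V E" "graph_connected V E" "V = S \<union> W" "S \<inter> W = {}" "x \<in> S" "y \<in> W"
  shows "\<exists>u\<in>S. \<exists>w\<in>W. 0 < cond E u w"
proof (rule ccontr)
  assume nz: "\<not> ?thesis"
  have "(adj E)\<^sup>*\<^sup>* x z \<Longrightarrow> z \<in> S" for z
  proof (induction rule: rtranclp_induct)
    case base then show ?case using assms(5) .
  next
    case (step z1 z2)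
    from step.hyps(2) obtain a b l where ab: "(a,b,l) \<in> set E" "(a = z1 \<and> b = z2) \<or> (a = z2 \<and> b = z1)"
      unfolding adj_def by auto
    have "z2 \<in> V" using ab assms(1) by (auto simp: edges_in_def)
    show ?case
    proof (rule ccontr)
      assume "z2 \<notin> S"
      then have "z2 \<in> W" using \<open>z2 \<in> V\<close> assms(3) by auto
      then show False using nz cond_pos[OF assms(1) ab(1)] ab(2) step.IH by blast
    qed
  qed
  moreover have "(adj E)\<^sup>*\<^sup>* x y" using assms unfolding graph_connected_def by blast
  ultimately show False using assms(4,6) by blast
qed

definition T4 :: "('v \<Rightarrow> 'v \<Rightarrow> real) \<Rightarrow> 'v \<Rightarrow> 'v \<Rightarrow> 'v \<Rightarrow> 'v \<Rightarrow> real" where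
  "T4 K A B C D = K A B*K A C*K A D + K A B*K A C*K B D + K A B*K A C*K C D + K A B*K A D*K B C + K A B*K A D*K C D + K A B*K B C*K B D + K A B*K B C*K C D + K A B*K B D*K C D + K A C*K A D*K B C + K A C*K A D*K B D + K A C*K B C*K B D + K A C*K B C*K C D + K A C*K B D*K C D + K A D*K B C*K B D + K A D*K B C*K C D + K A D*K B D*K C D"

definition FA :: "('v \<Rightarrow> 'v \<Rightarrow> real) \<Rightarrow> 'v \<Rightarrow> 'v \<Rightarrow> 'v \<Rightarrow> 'v \<Rightarrow> real" where
  "FA K A B C D = K A B*K A C + K A B*K B C + K A B*K C D + K A C*K B C + K A C*K B D + K B C*K B D + K B C*K C D + K B D*K C D"

definition FB :: "('v \<Rightarrow> 'v \<Rightarrow> real) \<Rightarrow> 'v \<Rightarrow> 'v \<Rightarrow> 'v \<Rightarrow> 'v \<Rightarrow> real" where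
  "FB K A B C D = K A B*K A C + K A B*K B C + K A B*K C D + K A C*K B C"

definition FC :: "('v \<Rightarrow> 'v \<Rightarrow> real) \<Rightarrow> 'v \<Rightarrow> 'v \<Rightarrow> 'v \<Rightarrow> 'v \<Rightarrow> real" where
  "FC K A B C D = K A B*K A C + K A B*K B C + K A C*K B C + K A C*K B D"

lemma pos_sum_list: "x \<in> set xs \<Longrightarrow> (0::real) < x \<Longrightarrow> \<forall>y\<in>set xs. 0 \<le> y \<Longrightarrow> 0 < sum_list xs"
  using member_le_sum_list[of x xs] by fastforce

lemma T4_pos:
  fixes K :: "'v \<Rightarrow> 'v \<Rightarrow> real"
  assumes nn: "0 \<le> K A B" "0 \<le> K A C" "0 \<le> K A D" "0 \<le> K B C" "0 \<le> K B D" "0 \<le> K C D"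
    and tr: "(0 < K A B \<and> 0 < K A C \<and> 0 < K A D) \<or> (0 < K A B \<and> 0 < K A C \<and> 0 < K B D) \<or> (0 < K A B \<and> 0 < K A C \<and> 0 < K C D) \<or> (0 < K A B \<and> 0 < K A D \<and> 0 < K B C) \<or> (0 < K A B \<and> 0 < K A D \<and> 0 < K C D) \<or> (0 < K A B \<and> 0 < K B C \<and> 0 < K B D) \<or> (0 < K A B \<and> 0 < K B C \<and> 0 < K C D) \<or> (0 < K A B \<and> 0 < K B D \<and> 0 < K C D) \<or> (0 < K A C \<and> 0 < K A D \<and> 0 < K B C) \<or> (0 < K A C \<and> 0 < K A D \<and> 0 < K B D) \<or> (0 < K A C \<and> 0 < K B C \<and> 0 < K B D) \<or> (0 < K A C \<and> 0 < K B C \<and> 0 < K C D) \<or> (0 < K A C \<and> 0 < K B D \<and> 0 < K C D) \<or> (0 < K A D \<and> 0 < K B C \<and> 0 < K B D) \<or> (0 < K A D \<and> 0 < K B C \<and> 0 < K C D) \<or> (0 < K A D \<and> 0 < K B D \<and> 0 < K C D)"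
  shows "0 < T4 K A B C D"
proof -
  have L: "T4 K A B C D = sum_list [K A B*K A C*K A D, K A B*K A C*K B D, K A B*K A C*K C D, K A B*K A D*K B C, K A B*K A D*K C D, K A B*K B C*K B D, K A B*K B C*K C D, K A B*K B D*K C D, K A C*K A D*K B C, K A C*K A D*K B D, K A C*K B C*K B D, K A C*K B C*K C D, K A C*K B D*K C D, K A D*K B C*K B D, K A D*K B C*K C D, K A D*K B D*K C D]" by (simp add: T4_def add.assoc)
  have nnl: "\<forall>y\<in>set [K A B*K A C*K A D, K A B*K A C*K B D, K A B*K A C*K C D, K A B*K A D*K B C, K A B*K A D*K C D, K A B*K B C*K B D, K A B*K B C*K C D, K A B*K B D*K C D, K A C*K A D*K B C, K A C*K A D*K B D, K A C*K B C*K B D, K A C*K B C*K C D, K A C*K B D*K C D, K A D*K B C*K B D, K A D*K B C*K C D, K A D*K B D*K C D]. 0 \<le> y" using nn by simp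
  have "\<exists>x\<in>set [K A B*K A C*K A D, K A B*K A C*K B D, K A B*K A C*K C D, K A B*K A D*K B C, K A B*K A D*K C D, K A B*K B C*K B D, K A B*K B C*K C D, K A B*K B D*K C D, K A C*K A D*K B C, K A C*K A D*K B D, K A C*K B C*K B D, K A C*K B C*K C D, K A C*K B D*K C D, K A D*K B C*K B D, K A D*K B C*K C D, K A D*K B D*K C D]. 0 < x" using tr by (auto simp: mult_pos_pos)
  then show ?thesis unfolding L using pos_sum_list nnl by blast
qed


lemma T4_conn:
  assumes "edges_in V E" "graph_connected V E" "V = {A,B,C,D}" "distinct [A,B,C,D]"
  shows "0 < T4 (cond E) A B C D"
proof -
  have symK: "cond E B A = cond E A B" "cond E C A = cond E A C" "cond E D A = cond E A D" "cond E C B = cond E B C" "cond E D B = cond E B D" "cond E D C = cond E C D" by (simp_all add: cond_sym)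
  have "\<exists>u\<in>{A}. \<exists>w\<in>{B,C,D}. 0 < cond E u w"
    by (rule cut[OF assms(1,2)]) (use assms(3,4) in auto)
  then have cut0: "0 < cond E A B \<or> 0 < cond E A C \<or> 0 < cond E A D" by (simp add: symK)
  have "\<exists>u\<in>{B}. \<exists>w\<in>{A,C,D}. 0 < cond E u w"
    by (rule cut[OF assms(1,2)]) (use assms(3,4) in auto)
  then have cut1: "0 < cond E A B \<or> 0 < cond E B C \<or> 0 < cond E B D" by (simp add: symK)
  have "\<exists>u\<in>{C}. \<exists>w\<in>{A,B,D}. 0 < cond E u w"
    by (rule cut[OF assms(1,2)]) (use assms(3,4) in auto)
  then have cut2: "0 < cond E A C \<or> 0 < cond E B C \<or> 0 < cond E C D" by (simp add: symK)
  have "\<exists>u\<in>{D}. \<exists>w\<in>{A,B,C}. 0 < cond E u w"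
    by (rule cut[OF assms(1,2)]) (use assms(3,4) in auto)
  then have cut3: "0 < cond E A D \<or> 0 < cond E B D \<or> 0 < cond E C D" by (simp add: symK)
  have "\<exists>u\<in>{A,B}. \<exists>w\<in>{C,D}. 0 < cond E u w"
    by (rule cut[OF assms(1,2)]) (use assms(3,4) in auto)
  then have cut4: "0 < cond E A C \<or> 0 < cond E A D \<or> 0 < cond E B C \<or> 0 < cond E B D" by (simp add: symK)
  have "\<exists>u\<in>{A,C}. \<exists>w\<in>{B,D}. 0 < cond E u w"
    by (rule cut[OF assms(1,2)]) (use assms(3,4) in auto)
  then have cut5: "0 < cond E A B \<or> 0 < cond E A D \<or> 0 < cond E B C \<or> 0 < cond E C D" by (simp add: symK)
  have "\<exists>u\<in>{A,D}. \<exists>w\<in>{B,C}. 0 < cond E u w"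
    by (rule cut[OF assms(1,2)]) (use assms(3,4) in auto)
  then have cut6: "0 < cond E A B \<or> 0 < cond E A C \<or> 0 < cond E B D \<or> 0 < cond E C D" by (simp add: symK)
  have nn: "0 \<le> cond E A B" "0 \<le> cond E A C" "0 \<le> cond E A D" "0 \<le> cond E B C" "0 \<le> cond E B D" "0 \<le> cond E C D"
    using cond_nonneg[OF assms(1)] by auto
  have tr: "(0 < cond E A B \<and> 0 < cond E A C \<and> 0 < cond E A D) \<or> (0 < cond E A B \<and> 0 < cond E A C \<and> 0 < cond E B D) \<or> (0 < cond E A B \<and> 0 < cond E A C \<and> 0 < cond E C D) \<or> (0 < cond E A B \<and> 0 < cond E A D \<and> 0 < cond E B C) \<or> (0 < cond E A B \<and> 0 < cond E A D \<and> 0 < cond E C D) \<or> (0 < cond E A B \<and> 0 < cond E B C \<and> 0 < cond E B D) \<or> (0 < cond E A B \<and> 0 < cond E B C \<and> 0 < cond E C D) \<or> (0 < cond E A B \<and> 0 < cond E B D \<and> 0 < cond E C D) \<or> (0 < cond E A C \<and> 0 < cond E A D \<and> 0 < cond E B C) \<or> (0 < cond E A C \<and> 0 < cond E A D \<and> 0 < cond E B D) \<or> (0 < cond E A C \<and> 0 < cond E B C \<and> 0 < cond E B D) \<or> (0 < cond E A C \<and> 0 < cond E B C \<and> 0 < cond E C D) \<or> (0 < cond E A C \<and> 0 < cond E B D \<and> 0 < cond E C D) \<or> (0 < cond E A D \<and> 0 < cond E B C \<and> 0 < cond E B D) \<or> (0 < cond E A D \<and> 0 < cond E B C \<and> 0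 < cond E C D) \<or> (0 < cond E A D \<and> 0 < cond E B D \<and> 0 < cond E C D)"
    using cut0 cut1 cut2 cut3 cut4 cut5 cut6 by argo
  show ?thesis by (rule T4_pos[OF nn tr])
qed


lemma pot4:
  assumes "edges_in V E" "graph_connected V E" "V = {A,B,C,D}" "distinct [A,B,C,D]"
  shows "is_potential V E D A (\<lambda>x. if x = A then FA (cond E) A B C D / T4 (cond E) A B C D
      else if x = B then FB (cond E) A B C D / T4 (cond E) A B C D
      else if x = C then FC (cond E) A B C D / T4 (cond E) A B C D else 0)"
    (is "is_potential V E D A ?phi")
proof -
  define T where "T = T4 (cond E) A B C D"
  define fa where "fa = FA (cond E) A B C D"
  define fb where "fb = FB (cond E) A B C D"
  define fc where "fc = FC (cond E) A B C D"
  have Tp: "0 < T" using T4_conn[OF assms] unfolding T_def .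
  have symK: "cond E B A = cond E A B" "cond E C A = cond E A C" "cond E D A = cond E A D" "cond E C B = cond E B C" "cond E D B = cond E B D" "cond E D C = cond E C D" by (simp_all add: cond_sym)
  have dA: "A \<noteq> B" "A \<noteq> C" "A \<noteq> D" "B \<noteq> C" "B \<noteq> D" "C \<noteq> D" using assms(4) by auto
  have pA: "cond E A B * (fa - fb) + cond E A C * (fa - fc) + cond E A D * fa = T"
    unfolding fa_def fb_def fc_def T_def FA_def FB_def FC_def T4_def by (simp add: algebra_simps)
  have pB: "cond E A B * (fb - fa) + cond E B C * (fb - fc) + cond E B D * fb = 0"
    unfolding fa_def fb_def fc_def T_def FA_def FB_def FC_def T4_def by (simp add: algebra_simps)
  have pC: "cond E A C * (fc - fa) + cond E B C * (fc - fb) + cond E C D * fc = 0"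
    unfolding fa_def fb_def fc_def T_def FA_def FB_def FC_def T4_def by (simp add: algebra_simps)
  have phiv: "?phi A = fa / T" "?phi B = fb / T" "?phi C = fc / T" "?phi D = 0"
    using dA by (auto simp: fa_def fb_def fc_def T_def)
  show ?thesis unfolding is_potential_def
  proof (intro conjI ballI allI impI)
    show "?phi D = 0" using dA by auto
    show "?phi v = 0" if "v \<notin> V" for v using that assms(3) by auto
    fix v assume v: "v \<in> V"
    note o = outflow4[OF assms(1,3,4) v, of ?phi]
    from v assms(3) consider "v = A" | "v = B" | "v = C" | "v = D" by auto
    then show "outflow E ?phi v = (if v = A then 1 else 0) - (if v = D then 1 else 0)"
    proof cases
      case 1
      have "outflow E ?phi v = (cond E A B * (fa - fb) + cond E A C * (fa - fc) + cond E A D * fa) / T"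
        unfolding o unfolding 1 phiv using Tp by (simp add: field_simps)
      then show ?thesis using pA Tp 1 dA by simp
    next
      case 2
      have "outflow E ?phi v = (cond E A B * (fb - fa) + cond E B C * (fb - fc) + cond E B D * fb) / T"
        unfolding o unfolding 2 phiv using Tp by (simp add: field_simps symK)
      then show ?thesis using pB Tp 2 dA by simp
    next
      case 3
      have "outflow E ?phi v = (cond E A C * (fc - fa) + cond E B C * (fc - fb) + cond E C D * fc) / T"
        unfolding o unfolding 3 phiv using Tp by (simp add: field_simps symK)
      then show ?thesis using pC Tp 3 dA by simp
    next
      case 4
      have "outflow E ?phi v = - ((cond E A B * (fa - fb) + cond E A C * (fa - fc) + cond E A D * fa)
           + (cond E A B * (fb - fa) + cond E B C * (fb - fc) + cond E B D * fb)
           + (cond E A C * (fc - fa) + cond E B C * (fc - fb) + cond E C D * fc)) / T"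
        unfolding o unfolding 4 phiv using Tp by (simp add: field_simps symK)
      then show ?thesis using pA pB pC Tp 4 dA by simp
    qed
  qed
qed

lemma volt4:
  assumes "edges_in V E" "graph_connected V E" "V = {A,B,C,D}" "distinct [A,B,C,D]"
  shows "voltage V E D A A = FA (cond E) A B C D / T4 (cond E) A B C D"
    "voltage V E D B A = FB (cond E) A B C D / T4 (cond E) A B C D"
    "voltage V E D C A = FC (cond E) A B C D / T4 (cond E) A B C D"
    "voltage V E D D A = 0"
  using voltage_eq[OF _ assms(1,2) _ pot4[OF assms]] assms(3,4) by auto

lemma enum2:
  assumes "finite V" "card V = 4" "x \<in> V" "y \<in> V" "x \<noteq> y"
  obtains B C where "V = {x,B,C,y}" "distinct [x,B,C,y]"
proof -
  have "card (V - {x,y}) = 2" using assms by (simp add: card_Diff_subset)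
  then obtain B C where BC: "V - {x,y} = {B,C}" "B \<noteq> C" by (auto simp: card_2_iff)
  then have "V = {x,B,C,y}" "distinct [x,B,C,y]" using assms(3,4,5) by auto
  then show ?thesis using that by blast
qed

lemma enum3:
  assumes "finite V" "card V = 4" "x \<in> V" "y \<in> V" "z \<in> V" "distinct [x,y,z]"
  obtains C where "V = {x,z,C,y}" "distinct [x,z,C,y]"
proof -
  have "card (V - {x,y,z}) = 1" using assms by (simp add: card_Diff_subset)
  then obtain C where C: "V - {x,y,z} = {C}" by (rule card_1_singletonE)
  then have "V = {x,z,C,y}" "distinct [x,z,C,y]" using assms(3-6) by auto
  then show ?thesis using that by blast
qed

lemma zero_potential: "z \<in> V \<Longrightarrow> is_potential V E z z (\<lambda>x. 0)"
proof -
  have "outflow E (\<lambda>x. 0) v = 0" for v by (induction E) auto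
  then show ?thesis by (simp add: is_potential_def)
qed

lemma volt_same:
  assumes "finite V" "edges_in V E" "graph_connected V E" "z \<in> V"
  shows "voltage V E z x z = 0"
  using voltage_eq[OF assms zero_potential[OF assms(4)]] by simp

lemma eff_res_same:
  assumes "finite V" "edges_in V E" "graph_connected V E" "z \<in> V"
  shows "eff_res V E z z = 0"
  using volt_same[OF assms] by (simp add: eff_res_def)

lemma symK4:
  fixes E :: "'v medges" and A B C D :: 'v
  shows "cond E B A = cond E A B" "cond E C A = cond E A C" "cond E D A = cond E A D"
    "cond E C B = cond E B C" "cond E D B = cond E B D" "cond E D C = cond E C D"
  by (simp_all add: cond_sym)

lemma eff_res_sym4:
  assumes "edges_in V E" "graph_connected V E" "V = {A,B,C,D}" "distinct [A,B,C,D]"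
  shows "eff_res V E A D = eff_res V E D A"
proof -
  have sK: "cond E B A = cond E A B" "cond E C A = cond E A C" "cond E D A = cond E A D"
    "cond E C B = cond E B C" "cond E D B = cond E B D" "cond E D C = cond E C D"
    by (simp_all add: cond_sym)
  have e1: "eff_res V E A D = FA (cond E) A B C D / T4 (cond E) A B C D"
    using volt4(1)[OF assms] by (simp add: eff_res_def)
  have e2: "eff_res V E D A = FA (cond E) D B C A / T4 (cond E) D B C A"
  proof -
    have "V = {D,B,C,A}" "distinct [D,B,C,A]" using assms(3,4) by auto
    from volt4(1)[OF assms(1,2) this] show ?thesis by (simp add: eff_res_def)
  qed
  have "T4 (cond E) D B C A = T4 (cond E) A B C D"
    unfolding T4_def sK by (simp add: algebra_simps)
  moreover have "FA (cond E) D B C A = FA (cond E) A B C D"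
    unfolding FA_def sK by (simp add: algebra_simps)
  ultimately show ?thesis using e1 e2 by simp
qed

lemma ident4:
  assumes "edges_in V E" "graph_connected V E" "V = {A,B,C,D}" "distinct [A,B,C,D]"
  shows "2 * voltage V E D B A - eff_res V E A D = eff_res V E B D - eff_res V E B A"
    "2 * voltage V E D A A - eff_res V E A D = eff_res V E A D - eff_res V E A A"
    "2 * voltage V E D D A - eff_res V E A D = eff_res V E D D - eff_res V E D A"
proof -
  have sK: "cond E B A = cond E A B" "cond E C A = cond E A C" "cond E D A = cond E A D"
    "cond E C B = cond E B C" "cond E D B = cond E B D" "cond E D C = cond E C D"
    by (simp_all add: cond_sym)
  have fin: "finite V" using assms(3) by simp
  have inV: "A \<in> V" "B \<in> V" "C \<in> V" "D \<in> V" using assms(3) by auto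
  have v1: "voltage V E D B A = FB (cond E) A B C D / T4 (cond E) A B C D"
    "voltage V E D A A = FA (cond E) A B C D / T4 (cond E) A B C D"
    "voltage V E D D A = 0"
    using volt4[OF assms] by auto
  have r1: "eff_res V E A D = FA (cond E) A B C D / T4 (cond E) A B C D"
    using volt4(1)[OF assms] by (simp add: eff_res_def)
  have r2: "eff_res V E B D = FA (cond E) B A C D / T4 (cond E) B A C D"
  proof -
    have "V = {B,A,C,D}" "distinct [B,A,C,D]" using assms(3,4) by auto
    from volt4(1)[OF assms(1,2) this] show ?thesis by (simp add: eff_res_def)
  qed
  have r3: "eff_res V E B A = FA (cond E) B C D A / T4 (cond E) B C D A"
  proof -
    have "V = {B,C,D,A}" "distinct [B,C,D,A]" using assms(3,4) by auto
    from volt4(1)[OF assms(1,2) this] show ?thesis by (simp add: eff_res_def)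
  qed
  have t2: "T4 (cond E) B A C D = T4 (cond E) A B C D"
    unfolding T4_def sK by (simp add: algebra_simps)
  have t3: "T4 (cond E) B C D A = T4 (cond E) A B C D"
    unfolding T4_def sK by (simp add: algebra_simps)
  have num: "2 * FB (cond E) A B C D - FA (cond E) A B C D = FA (cond E) B A C D - FA (cond E) B C D A"
    unfolding FA_def FB_def sK by (simp add: algebra_simps)
  show "2 * voltage V E D B A - eff_res V E A D = eff_res V E B D - eff_res V E B A"
    unfolding v1 r1 r2 r3 t2 t3 using num by (simp add: diff_divide_distrib[symmetric])
  show "2 * voltage V E D A A - eff_res V E A D = eff_res V E A D - eff_res V E A A"
    unfolding v1 r1 using eff_res_same[OF fin assms(1,2) inV(1)] by simp
  show "2 * voltage V E D D A - eff_res V E A D = eff_res V E D D - eff_res V E D A"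
    unfolding v1 using eff_res_same[OF fin assms(1,2) inV(4)] eff_res_sym4[OF assms] by simp
qed

lemma Lim_bridge:
  assumes "(L::real) > 0"
  shows "Lim at_top (\<lambda>R. L * R\<^sup>2 / (L + R)\<^sup>2) = L"
proof -
  have "((\<lambda>R. L * R\<^sup>2 / (L + R)\<^sup>2) \<longlongrightarrow> L) at_top" using assms by real_asymp
  then show ?thesis by (rule tendsto_Lim[rotated]) simp
qed

lemma set_del: "set (del_edge E i) \<subseteq> set E"
  by (auto simp: del_edge_def dest: in_set_takeD in_set_dropD)

lemma set_E_del: "i < length E \<Longrightarrow> x \<in> set E \<Longrightarrow> x \<in> set (del_edge E i) \<or> x = E ! i"
  using id_take_nth_drop[of i E] unfolding del_edge_def
  by (metis Un_iff list.set_intros(2) set_ConsD set_append)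

lemma edges_in_del: "edges_in V E \<Longrightarrow> edges_in V (del_edge E i)"
  using set_del unfolding edges_in_def by blast

lemma outflow_del:
  assumes "i < length E" "E ! i = (u,v,L)"
  shows "outflow E phi w = outflow (del_edge E i) phi w +
    (if u = w then (phi w - phi v) / L else 0) + (if v = w then (phi w - phi u) / L else 0)"
proof -
  have "outflow E phi w = outflow (take i E @ E ! i # drop (Suc i) E) phi w"
    using id_take_nth_drop[OF assms(1)] by simp
  then show ?thesis using assms(2) by (simp add: outflow_append del_edge_def)
qed

lemma outflow_const_edges:
  "\<forall>(a,b,l)\<in>set E. phi a = phi b \<Longrightarrow> outflow E phi w = 0"
  by (induction E) auto

lemma adj_sym: "adj E x y = adj E y x"
  unfolding adj_def by blast

lemma rt_adj_sym: "(adj E)\<^sup>*\<^sup>* x y \<Longrightarrow> (adj E)\<^sup>*\<^sup>* y x"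
proof -
  have "symp (adj E)" by (rule sympI) (simp add: adj_sym)
  then have "symp (adj E)\<^sup>*\<^sup>*" by (rule symp_rtranclp)
  then show "(adj E)\<^sup>*\<^sup>* x y \<Longrightarrow> (adj E)\<^sup>*\<^sup>* y x" by (rule sympD)
qed

lemma bridge_sep:
  assumes "graph_connected V E" "i < length E" "E ! i = (u,v,L)" "v \<in> V"
    "\<not> graph_connected V (del_edge E i)"
  shows "\<not> (adj (del_edge E i))\<^sup>*\<^sup>* v u"
proof
  let ?D = "del_edge E i"
  assume vu: "(adj ?D)\<^sup>*\<^sup>* v u"
  have stp: "adj E x y \<Longrightarrow> adj ?D x y \<or> (x = u \<and> y = v) \<or> (x = v \<and> y = u)" for x y
  proof -
    assume "adj E x y"
    then obtain a b l where ab: "(a,b,l) \<in> set E" "(a = x \<and> b = y) \<or> (a = y \<and> b = x)"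
      unfolding adj_def by auto
    from set_E_del[OF assms(2) ab(1)] show ?thesis
    proof
      assume "(a,b,l) \<in> set ?D" then show ?thesis using ab(2) unfolding adj_def by blast
    next
      assume "(a,b,l) = E ! i" then show ?thesis using ab(2) assms(3) by auto
    qed
  qed
  have reach: "(adj E)\<^sup>*\<^sup>* v x \<Longrightarrow> (adj ?D)\<^sup>*\<^sup>* v x" for x
  proof (induction rule: rtranclp_induct)
    case base then show ?case by simp
  next
    case (step y z)
    from stp[OF step.hyps(2)] show ?case
    proof (elim disjE conjE)
      assume "adj ?D y z" then show ?thesis using step.IH rtranclp.rtrancl_into_rtrancl by metis
    next
      assume "y = u" "z = v" then show ?thesis by simp
    next
      assume "y = v" "z = u" then show ?thesis using vu by simp
    qed
  qed
  have "graph_connected V ?D" unfolding graph_connected_def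
  proof (intro ballI)
    fix x y assume "x \<in> V" "y \<in> V"
    then have "(adj E)\<^sup>*\<^sup>* v x" "(adj E)\<^sup>*\<^sup>* v y" using assms(1,4) unfolding graph_connected_def by auto
    then show "(adj ?D)\<^sup>*\<^sup>* x y" using reach rt_adj_sym rtranclp_trans by metis
  qed
  then show False using assms(5) by simp
qed

lemma sum_delta_diff:
  assumes "finite V" "u \<in> V" "v \<in> V"
  shows "(\<Sum>w\<in>V. f w * ((if w = u then 1 else 0) - (if w = v then 1 else 0))) = f u - (f v::real)"
proof -
  have "(\<Sum>w\<in>V. f w * ((if w = u then 1 else 0) - (if w = v then 1 else 0))) =
     (\<Sum>w\<in>V. (if w = u then f w else 0)) - (\<Sum>w\<in>V. (if w = v then f w else 0))"
  proof -
    have "f w * ((if w = u then 1 else 0) - (if w = v then 1 else 0)) = (if w = u then f w else 0) - (if w = v then f w else 0)" for w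
      by simp
    then show ?thesis by (simp add: sum_subtractf)
  qed
  then show ?thesis using assms by simp
qed

lemma scale_sq:
  assumes "(L::real) > 0" "L + R > 0"
  shows "(L / (L + R) * X)\<^sup>2 / L = L * X\<^sup>2 / (L + R)\<^sup>2"
proof -
  have "(L / (L + R) * X)\<^sup>2 / L = (L * L * X\<^sup>2) / ((L + R)\<^sup>2 * L)"
    by (simp add: power_mult_distrib power_divide power2_eq_square)
  also have "\<dots> = L * X\<^sup>2 / (L + R)\<^sup>2" using assms by (simp add: power2_eq_square)
  finally show ?thesis .
qed

lemma edge_terms:
  assumes fin: "finite V" and ein: "edges_in V E" and con: "graph_connected V E"
    and i: "i < length E" and p: "p \<in> V"
    and ex: "\<And>z y. z \<in> V \<Longrightarrow> y \<in> V \<Longrightarrow> graph_connected V (del_edge E i) \<Longrightarrow>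
               \<exists>phi. is_potential V (del_edge E i) z y phi"
  shows "yterm1 V E i = (voltage V E (eq E i) (ep E i) (ep E i))\<^sup>2 / elen E i
       \<and> yterm2 V E p i = (2 * voltage V E (eq E i) p (ep E i) - voltage V E (eq E i) (ep E i) (ep E i))\<^sup>2 / elen E i"
proof -
  obtain u v L where e: "E ! i = (u,v,L)" by (cases "E ! i") auto
  have uvL: "u \<in> V" "v \<in> V" "L > 0" using ein nth_mem[OF i] e unfolding edges_in_def by fastforce+
  have epq: "ep E i = u" "eq E i = v" "elen E i = L" using e by (auto simp: ep_def eq_def elen_def)
  define D where "D = del_edge E i"
  have einD: "edges_in V D" unfolding D_def by (rule edges_in_del[OF ein])
  have oD: "outflow E phi w = outflow D phi w +
    (if u = w then (phi w - phi v) / L else 0) + (if v = w then (phi w - phi u) / L else 0)" for phi w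
    unfolding D_def by (rule outflow_del[OF i e])
  show ?thesis
  proof (cases "graph_connected V D")
    case conD: True
    obtain phi2 where P2: "is_potential V D v u phi2" using ex[OF uvL(2,1)] conD unfolding D_def by blast
    define R where "R = phi2 u"
    have Ri: "R_i V E i = R"
      unfolding R_i_def epq eff_res_def R_def D_def[symmetric] by (rule voltage_eq[OF fin einD conD uvL(2) P2])
    have Rb: "R_b V E i p = phi2 p"
      unfolding R_b_def epq D_def[symmetric] by (rule voltage_eq[OF fin einD conD uvL(2) P2])
    define phi3 where "phi3 = (\<lambda>x. if x \<in> V then R - phi2 x else 0)"
    have P3: "is_potential V D u v phi3"
      unfolding is_potential_def
    proof (intro conjI allI impI ballI)
      show "phi3 u = 0" using uvL by (simp add: phi3_def R_def)
      show "phi3 x = 0" if "x \<notin> V" for x using that by (simp add: phi3_def)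
      fix w assume w: "w \<in> V"
      have "outflow D phi3 w = outflow D (\<lambda>x. (-1) * phi2 x + R) w"
        by (rule outflow_cong[OF einD w]) (simp add: phi3_def)
      also have "\<dots> = - outflow D phi2 w" using outflow_lin[of D "-1" phi2 R w] by simp
      finally show "outflow D phi3 w = (if w = v then 1 else 0) - (if w = u then 1 else 0)"
        using P2 w unfolding is_potential_def by simp
    qed
    have Ra: "R_a V E i p = R - phi2 p"
      unfolding R_a_def epq D_def[symmetric] voltage_eq[OF fin einD conD uvL(1) P3] using p by (simp add: phi3_def)
    have Rnn: "0 \<le> R"
    proof -
      have "(\<Sum>w\<in>V. phi2 w * outflow D phi2 w) = (\<Sum>w\<in>V. phi2 w * ((if w = u then 1 else 0) - (if w = v then 1 else 0)))"
        using P2 unfolding is_potential_def by (intro sum.cong) auto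
      also have "\<dots> = R" using sum_delta_diff[OF fin uvL(1,2)] P2 by (simp add: R_def is_potential_def)
      finally have "R = sum_list (map (\<lambda>(a,b,l). (phi2 a - phi2 b)^2 / l) D)"
        using energy[OF fin einD] by simp
      also have "\<dots> \<ge> 0" using einD by (intro sum_list_nonneg) (auto simp: edges_in_def)
      finally show ?thesis .
    qed
    have LR: "L + R > 0" using uvL Rnn by simp
    define s where "s = L / (L + R)"
    define psi where "psi = (\<lambda>x. s * phi2 x)"
    have Ppsi: "is_potential V E v u psi"
      unfolding is_potential_def
    proof (intro conjI allI impI ballI)
      show "psi v = 0" using P2 by (simp add: psi_def is_potential_def)
      show "psi x = 0" if "x \<notin> V" for x using that P2 by (simp add: psi_def is_potential_def)
      fix w assume w: "w \<in> V"
      have oD2: "outflow D psi w = s * ((if w = u then 1 else 0) - (if w = v then 1 else 0))"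
        using outflow_lin[of D s phi2 0 w] P2 w by (simp add: psi_def is_potential_def)
      have p2v: "phi2 v = 0" using P2 by (simp add: is_potential_def)
      show "outflow E psi w = (if w = u then 1 else 0) - (if w = v then 1 else 0)"
      proof (cases "u = v")
        case True
        then show ?thesis unfolding oD oD2 by simp
      next
        case False
        have "s * R / L = R / (L + R)" using uvL by (simp add: s_def)
        then have "s + s * R / L = L / (L + R) + R / (L + R)" by (simp add: s_def)
        also have "\<dots> = 1" using LR by (simp add: add_divide_distrib[symmetric])
        finally have "s + s * R / L = 1" .
        then show ?thesis unfolding oD oD2 using False p2v by (auto simp: psi_def R_def)
      qed
    qed
    have vE: "voltage V E v x u = psi x" for x by (rule voltage_eq[OF fin ein con uvL(2) Ppsi])
    have y1: "yterm1 V E i = L * R\<^sup>2 / (L + R)\<^sup>2"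
      unfolding yterm1_def Let_def epq Ri using conD by (simp add: D_def)
    have y2: "yterm2 V E p i = L * (R - 2 * phi2 p)\<^sup>2 / (L + R)\<^sup>2"
      unfolding yterm2_def Let_def epq Ri Ra Rb using conD by (simp add: D_def)
    have pu: "psi u = s * R" by (simp add: psi_def R_def)
    have e1: "(s * R)\<^sup>2 / L = L * R\<^sup>2 / (L + R)\<^sup>2" unfolding s_def by (rule scale_sq[OF uvL(3) LR])
    have "(2 * psi p - s * R) = s * (2 * phi2 p - R)" by (simp add: psi_def algebra_simps)
    moreover have "(s * (2 * phi2 p - R))\<^sup>2 / L = L * (2 * phi2 p - R)\<^sup>2 / (L + R)\<^sup>2"
      unfolding s_def by (rule scale_sq[OF uvL(3) LR])
    ultimately have e2: "(2 * psi p - s * R)\<^sup>2 / L = L * (R - 2 * phi2 p)\<^sup>2 / (L + R)\<^sup>2"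
      by (simp only: power2_commute)
    show ?thesis unfolding y1 y2 epq vE pu e1 e2 by simp
  next
    case nconD: False
    define psi where "psi = (\<lambda>x. if x \<in> V \<and> \<not> (adj D)\<^sup>*\<^sup>* v x then L else 0)"
    have nvu: "\<not> (adj D)\<^sup>*\<^sup>* v u" unfolding D_def by (rule bridge_sep[OF con i e uvL(2)]) (use nconD D_def in simp)
    have uv: "u \<noteq> v" using nvu by auto
    have psiu: "psi u = L" "psi v = 0" using nvu uvL by (auto simp: psi_def)
    have cst: "\<forall>(a,b,l)\<in>set D. psi a = psi b"
    proof (intro ballI, clarify)
      fix a b l assume ab: "(a,b,l) \<in> set D"
      then have "adj D a b" "adj D b a" unfolding adj_def by blast+
      then have "(adj D)\<^sup>*\<^sup>* v a \<longleftrightarrow> (adj D)\<^sup>*\<^sup>* v b"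
        by (meson rtranclp.rtrancl_into_rtrancl)
      moreover have "a \<in> V" "b \<in> V" using ab einD unfolding edges_in_def by auto
      ultimately show "psi a = psi b" by (simp add: psi_def)
    qed
    have Ppsi: "is_potential V E v u psi"
      unfolding is_potential_def
    proof (intro conjI allI impI ballI)
      show "psi v = 0" by (rule psiu(2))
      show "psi x = 0" if "x \<notin> V" for x using that by (simp add: psi_def)
      fix w assume w: "w \<in> V"
      show "outflow E psi w = (if w = u then 1 else 0) - (if w = v then 1 else 0)"
        unfolding oD outflow_const_edges[OF cst] using uv psiu uvL by auto
    qed
    have vE: "voltage V E v x u = psi x" for x by (rule voltage_eq[OF fin ein con uvL(2) Ppsi])
    have y1: "yterm1 V E i = L"
      unfolding yterm1_def Let_def epq using nconD Lim_bridge[OF uvL(3)] by (simp add: D_def)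
    have y2: "yterm2 V E p i = L"
      unfolding yterm2_def Let_def epq using nconD Lim_bridge[OF uvL(3)] by (simp add: D_def)
    have "psi p = 0 \<or> psi p = L" by (simp add: psi_def)
    then show ?thesis unfolding y1 y2 epq vE psiu using uvL
      by (auto simp: power2_eq_square)
  qed
qed

lemma step1:
  fixes c1 c2 c3 c4 c5 c6 f1 f2 f3 f4 f5 f6 r1 r2 r3 r4 r5 r6 T :: real
  assumes Tp: "T > 0" and r: "r1 = f1 / T" "r2 = f2 / T" "r3 = f3 / T" "r4 = f4 / T" "r5 = f5 / T" "r6 = f6 / T"
  shows "(1/4 * (c1 * r1^2 + c2 * r2^2 + c3 * r3^2 + c4 * r4^2 + c5 * r5^2 + c6 * r6^2) + 3/4 * (c1 * (0 - r1)^2 + c2 * (0 - r2)^2 + c3 * (0 - r3)^2 + c4 * (r1 - r2)^2 + c5 * (r1 - r3)^2 + c6 * (r2 - r3)^2)) * T^2 = 1/4 * (c1 * f1^2 + c2 * f2^2 + c3 * f3^2 + c4 * f4^2 + c5 * f5^2 + c6 * f6^2) + 3/4 * (c1 * (0 - f1)^2 + c2 * (0 - f2)^2 + c3 * (0 - f3)^2 + c4 * (f1 - f2)^2 + c5 * (f1 - f3)^2 + c6 * (f2 - f3)^2)" "(r1 + r2 + r3 + r4 + r5 + r6) * T = f1 + f2 + f3 + f4 + f5 + f6"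
  using Tp unfolding r by (simp_all add: field_simps power2_eq_square)

lemma step2:
  fixes c1 c2 c3 c4 c5 c6 f1 f2 f3 f4 f5 f6 T :: real
  assumes T: "T = c3*c5*c6 + c3*c4*c6 + c3*c4*c5 + c2*c5*c6 + c2*c4*c6 + c2*c4*c5 + c2*c3*c5 + c2*c3*c4 + c1*c5*c6 + c1*c4*c6 + c1*c4*c5 + c1*c3*c6 + c1*c3*c4 + c1*c2*c6 + c1*c2*c5 + c1*c2*c3"
    and f1: "f1 = c5*c6 + c4*c6 + c4*c5 + c3*c6 + c3*c4 + c2*c6 + c2*c5 + c2*c3"
    and f2: "f2 = c5*c6 + c4*c6 + c4*c5 + c3*c5 + c3*c4 + c1*c6 + c1*c5 + c1*c3"
    and f3: "f3 = c5*c6 + c4*c6 + c4*c5 + c2*c5 + c2*c4 + c1*c6 + c1*c4 + c1*c2"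
    and f4: "f4 = c3*c6 + c3*c5 + c2*c6 + c2*c5 + c2*c3 + c1*c6 + c1*c5 + c1*c3"
    and f5: "f5 = c3*c6 + c3*c4 + c2*c6 + c2*c4 + c2*c3 + c1*c6 + c1*c4 + c1*c2"
    and f6: "f6 = c3*c5 + c3*c4 + c2*c5 + c2*c4 + c1*c5 + c1*c4 + c1*c3 + c1*c2"
  shows "T * (f1 + f2 + f3 + f4 + f5 + f6) - 3 * (1/4 * (c1 * f1^2 + c2 * f2^2 + c3 * f3^2 + c4 * f4^2 + c5 * f5^2 + c6 * f6^2) + 3/4 * (c1 * (0 - f1)^2 + c2 * (0 - f2)^2 + c3 * (0 - f3)^2 + c4 * (f1 - f2)^2 + c5 * (f1 - f3)^2 + c6 * (f2 - f3)^2)) = c3^2*c4*c5*c6 + c3^2*c4^2*c6 + c3^2*c4^2*c5 + c2*c3*c5^2*c6 + 2*c2*c3*c4*c5*c6 + c2*c3*c4*c5^2 + c2*c3*c4^2*c6 + c2*c3*c4^2*c5 + c2*c3^2*c4*c5 + c2*c3^2*c4^2 + c2^2*c5^2*c6 + c2^2*c4*c5*c6 + c2^2*c4*c5^2 + c2^2*c3*c5^2 + c2^2*c3*c4*c5 + c1*c3*c5*c6^2 + c1*c3*c4*c6^2 + 2*c1*c3*c4*c5*c6 + c1*c3*c4^2*c6 + c1*c3*c4^2*c5 + c1*c3^2*c4*c6 + c1*c3^2*c4^2 + c1*c2*c5*c6^2 + c1*c2*c5^2*c6 + c1*c2*c4*c6^2 + 2*c1*c2*c4*c5*c6 + c1*c2*c4*c5^2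 + 2*c1*c2*c3*c5*c6 + 2*c1*c2*c3*c4*c6 + 2*c1*c2*c3*c4*c5 + c1*c2*c3^2*c4 + c1*c2^2*c5*c6 + c1*c2^2*c5^2 + c1*c2^2*c3*c5 + c1^2*c5*c6^2 + c1^2*c4*c6^2 + c1^2*c4*c5*c6 + c1^2*c3*c6^2 + c1^2*c3*c4*c6 + c1^2*c2*c6^2 + c1^2*c2*c5*c6 + c1^2*c2*c3*c6"
    "4 * (1/4 * (c1 * f1^2 + c2 * f2^2 + c3 * f3^2 + c4 * f4^2 + c5 * f5^2 + c6 * f6^2) + 3/4 * (c1 * (0 - f1)^2 + c2 * (0 - f2)^2 + c3 * (0 - f3)^2 + c4 * (f1 - f2)^2 + c5 * (f1 - f3)^2 + c6 * (f2 - f3)^2)) - T * (f1 + f2 + f3 + f4 + f5 + f6) = c3*c5^2*c6^2 + 2*c3*c4*c5*c6^2 + 2*c3*c4*c5^2*c6 + c3*c4^2*c6^2 + 2*c3*c4^2*c5*c6 + c3*c4^2*c5^2 + c3^2*c5*c6^2 + c3^2*c5^2*c6 + c3^2*c4*c6^2 + 2*c3^2*c4*c5*c6 + c3^2*c4*c5^2 + c2*c5^2*c6^2 + 2*c2*c4*c5*c6^2 + 2*c2*c4*c5^2*c6 + c2*c4^2*c6^2 + 2*c2*c4^2*c5*c6 + c2*c4^2*c5^2 + 2*c2*c3*c5*c6^2 + 2*c2*c3*c5^2*c6 + 2*c2*c3*c4*c6^2 + 6*c2*c3*c4*c5*c6 + 2*c2*c3*c4*c5^2 + 2*c2*c3*c4^2*c6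 + 2*c2*c3*c4^2*c5 + 2*c2*c3^2*c5*c6 + c2*c3^2*c5^2 + 2*c2*c3^2*c4*c6 + 2*c2*c3^2*c4*c5 + c2^2*c5*c6^2 + c2^2*c4*c6^2 + 2*c2^2*c4*c5*c6 + c2^2*c4^2*c6 + c2^2*c4^2*c5 + 2*c2^2*c3*c5*c6 + 2*c2^2*c3*c4*c6 + 2*c2^2*c3*c4*c5 + c2^2*c3*c4^2 + c2^2*c3^2*c5 + c2^2*c3^2*c4 + c1*c5^2*c6^2 + 2*c1*c4*c5*c6^2 + 2*c1*c4*c5^2*c6 + c1*c4^2*c6^2 + 2*c1*c4^2*c5*c6 + c1*c4^2*c5^2 + 2*c1*c3*c5*c6^2 + 2*c1*c3*c5^2*c6 + 2*c1*c3*c4*c6^2 + 6*c1*c3*c4*c5*c6 + 2*c1*c3*c4*c5^2 + 2*c1*c3*c4^2*c6 + 2*c1*c3*c4^2*c5 + c1*c3^2*c6^2 + 2*c1*c3^2*c5*c6 + 2*c1*c3^2*c4*c6 + 2*c1*c3^2*c4*c5 + 2*c1*c2*c5*c6^2 + 2*c1*c2*c5^2*c6 + 2*c1*c2*c4*c6^2 + 6*c1*c2*c4*c5*c6 + 2*c1*c2*c4*c5^2 + 2*c1*c2*c4^2*c6 + 2*c1*c2*c4^2*c5 + 2*c1*c2*c3*c6^2 + 6*c1*c2*c3*c5*c6 + 2*c1*c2*c3*c5^2 + 6*c1*c2*c3*c4*c6 + 6*c1*c2*c3*c4*c5 + 2*c1*c2*c3*c4^2 + 2*c1*c2*c3^2*c6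 + 2*c1*c2*c3^2*c5 + 2*c1*c2*c3^2*c4 + c1*c2^2*c6^2 + 2*c1*c2^2*c5*c6 + 2*c1*c2^2*c4*c6 + 2*c1*c2^2*c4*c5 + 2*c1*c2^2*c3*c6 + 2*c1*c2^2*c3*c5 + 2*c1*c2^2*c3*c4 + c1*c2^2*c3^2 + c1^2*c5^2*c6 + 2*c1^2*c4*c5*c6 + c1^2*c4*c5^2 + c1^2*c4^2*c6 + c1^2*c4^2*c5 + 2*c1^2*c3*c5*c6 + 2*c1^2*c3*c4*c6 + 2*c1^2*c3*c4*c5 + c1^2*c3*c4^2 + c1^2*c3^2*c6 + c1^2*c3^2*c4 + 2*c1^2*c2*c5*c6 + c1^2*c2*c5^2 + 2*c1^2*c2*c4*c6 + 2*c1^2*c2*c4*c5 + 2*c1^2*c2*c3*c6 + 2*c1^2*c2*c3*c5 + 2*c1^2*c2*c3*c4 + c1^2*c2*c3^2 + c1^2*c2^2*c6 + c1^2*c2^2*c5 + c1^2*c2^2*c3"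
  unfolding T f1 f2 f3 f4 f5 f6 by (simp_all add: algebra_simps power2_eq_square power3_eq_cube power4_eq_xxxx)

lemma final_ineq:
  fixes c1 c2 c3 c4 c5 c6 f1 f2 f3 f4 f5 f6 r1 r2 r3 r4 r5 r6 T :: real
  assumes nn: "0 \<le> c1" "0 \<le> c2" "0 \<le> c3" "0 \<le> c4" "0 \<le> c5" "0 \<le> c6" and Tp: "T > 0" and r: "r1 = f1 / T" "r2 = f2 / T" "r3 = f3 / T" "r4 = f4 / T" "r5 = f5 / T" "r6 = f6 / T"
    and T: "T = c3*c5*c6 + c3*c4*c6 + c3*c4*c5 + c2*c5*c6 + c2*c4*c6 + c2*c4*c5 + c2*c3*c5 + c2*c3*c4 + c1*c5*c6 + c1*c4*c6 + c1*c4*c5 + c1*c3*c6 + c1*c3*c4 + c1*c2*c6 + c1*c2*c5 + c1*c2*c3"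
    and f1: "f1 = c5*c6 + c4*c6 + c4*c5 + c3*c6 + c3*c4 + c2*c6 + c2*c5 + c2*c3"
    and f2: "f2 = c5*c6 + c4*c6 + c4*c5 + c3*c5 + c3*c4 + c1*c6 + c1*c5 + c1*c3"
    and f3: "f3 = c5*c6 + c4*c6 + c4*c5 + c2*c5 + c2*c4 + c1*c6 + c1*c4 + c1*c2"
    and f4: "f4 = c3*c6 + c3*c5 + c2*c6 + c2*c5 + c2*c3 + c1*c6 + c1*c5 + c1*c3"
    and f5: "f5 = c3*c6 + c3*c4 + c2*c6 + c2*c4 + c2*c3 + c1*c6 + c1*c4 + c1*c2"
    and f6: "f6 = c3*c5 + c3*c4 + c2*c5 + c2*c4 + c1*c5 + c1*c4 + c1*c3 + c1*c2"
  shows "3 * (1/4 * (c1 * r1^2 + c2 * r2^2 + c3 * r3^2 + c4 * r4^2 + c5 * r5^2 + c6 * r6^2) + 3/4 * (c1 * (0 - r1)^2 + c2 * (0 - r2)^2 + c3 * (0 - r3)^2 + c4 * (r1 - r2)^2 + c5 * (r1 - r3)^2 + c6 * (r2 - r3)^2)) \<le> r1 + r2 + r3 + r4 + r5 + r6 \<and> r1 + r2 + r3 + r4 + r5 + r6 \<le> 4 * (1/4 * (c1 * r1^2 + c2 * r2^2 + c3 * r3^2 + c4 * r4^2 + c5 * r5^2 + c6 * r6^2) + 3/4 * (c1 * (0 - r1)^2 + c2 * (0 - r2)^2 + c3 * (0 - r3)^2 + c4 * (r1 - r2)^2 + c5 * (r1 - r3)^2 + c6 * (r2 - r3)^2))"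
proof -
  note s1 = step1[OF Tp r]
  note s2 = step2[OF T f1 f2 f3 f4 f5 f6]
  have p3: "0 \<le> c3^2*c4*c5*c6 + c3^2*c4^2*c6 + c3^2*c4^2*c5 + c2*c3*c5^2*c6 + 2*c2*c3*c4*c5*c6 + c2*c3*c4*c5^2 + c2*c3*c4^2*c6 + c2*c3*c4^2*c5 + c2*c3^2*c4*c5 + c2*c3^2*c4^2 + c2^2*c5^2*c6 + c2^2*c4*c5*c6 + c2^2*c4*c5^2 + c2^2*c3*c5^2 + c2^2*c3*c4*c5 + c1*c3*c5*c6^2 + c1*c3*c4*c6^2 + 2*c1*c3*c4*c5*c6 + c1*c3*c4^2*c6 + c1*c3*c4^2*c5 + c1*c3^2*c4*c6 + c1*c3^2*c4^2 + c1*c2*c5*c6^2 + c1*c2*c5^2*c6 + c1*c2*c4*c6^2 + 2*c1*c2*c4*c5*c6 + c1*c2*c4*c5^2 + 2*c1*c2*c3*c5*c6 + 2*c1*c2*c3*c4*c6 + 2*c1*c2*c3*c4*c5 + c1*c2*c3^2*c4 + c1*c2^2*c5*c6 + c1*c2^2*c5^2 + c1*c2^2*c3*c5 + c1^2*c5*c6^2 + c1^2*c4*c6^2 + c1^2*c4*c5*c6 + c1^2*c3*c6^2 + c1^2*c3*c4*c6 + c1^2*c2*c6^2 + c1^2*c2*c5*c6 + c1^2*c2*c3*c6" using nn by (intro add_nonneg_nonneg mult_nonneg_nonneg zero_le_power; simp)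
  have p4: "0 \<le> c3*c5^2*c6^2 + 2*c3*c4*c5*c6^2 + 2*c3*c4*c5^2*c6 + c3*c4^2*c6^2 + 2*c3*c4^2*c5*c6 + c3*c4^2*c5^2 + c3^2*c5*c6^2 + c3^2*c5^2*c6 + c3^2*c4*c6^2 + 2*c3^2*c4*c5*c6 + c3^2*c4*c5^2 + c2*c5^2*c6^2 + 2*c2*c4*c5*c6^2 + 2*c2*c4*c5^2*c6 + c2*c4^2*c6^2 + 2*c2*c4^2*c5*c6 + c2*c4^2*c5^2 + 2*c2*c3*c5*c6^2 + 2*c2*c3*c5^2*c6 + 2*c2*c3*c4*c6^2 + 6*c2*c3*c4*c5*c6 + 2*c2*c3*c4*c5^2 + 2*c2*c3*c4^2*c6 + 2*c2*c3*c4^2*c5 + 2*c2*c3^2*c5*c6 + c2*c3^2*c5^2 + 2*c2*c3^2*c4*c6 + 2*c2*c3^2*c4*c5 + c2^2*c5*c6^2 + c2^2*c4*c6^2 + 2*c2^2*c4*c5*c6 + c2^2*c4^2*c6 + c2^2*c4^2*c5 + 2*c2^2*c3*c5*c6 + 2*c2^2*c3*c4*c6 + 2*c2^2*c3*c4*c5 + c2^2*c3*c4^2 + c2^2*c3^2*c5 + c2^2*c3^2*c4 + c1*c5^2*c6^2 + 2*c1*c4*c5*c6^2 + 2*c1*c4*c5^2*c6 + c1*c4^2*c6^2 + 2*c1*c4^2*c5*c6 + c1*c4^2*c5^2 + 2*c1*c3*c5*c6^2 + 2*c1*c3*c5^2*c6 + 2*c1*c3*c4*c6^2 + 6*c1*c3*c4*c5*c6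 + 2*c1*c3*c4*c5^2 + 2*c1*c3*c4^2*c6 + 2*c1*c3*c4^2*c5 + c1*c3^2*c6^2 + 2*c1*c3^2*c5*c6 + 2*c1*c3^2*c4*c6 + 2*c1*c3^2*c4*c5 + 2*c1*c2*c5*c6^2 + 2*c1*c2*c5^2*c6 + 2*c1*c2*c4*c6^2 + 6*c1*c2*c4*c5*c6 + 2*c1*c2*c4*c5^2 + 2*c1*c2*c4^2*c6 + 2*c1*c2*c4^2*c5 + 2*c1*c2*c3*c6^2 + 6*c1*c2*c3*c5*c6 + 2*c1*c2*c3*c5^2 + 6*c1*c2*c3*c4*c6 + 6*c1*c2*c3*c4*c5 + 2*c1*c2*c3*c4^2 + 2*c1*c2*c3^2*c6 + 2*c1*c2*c3^2*c5 + 2*c1*c2*c3^2*c4 + c1*c2^2*c6^2 + 2*c1*c2^2*c5*c6 + 2*c1*c2^2*c4*c6 + 2*c1*c2^2*c4*c5 + 2*c1*c2^2*c3*c6 + 2*c1*c2^2*c3*c5 + 2*c1*c2^2*c3*c4 + c1*c2^2*c3^2 + c1^2*c5^2*c6 + 2*c1^2*c4*c5*c6 + c1^2*c4*c5^2 + c1^2*c4^2*c6 + c1^2*c4^2*c5 + 2*c1^2*c3*c5*c6 + 2*c1^2*c3*c4*c6 + 2*c1^2*c3*c4*c5 + c1^2*c3*c4^2 + c1^2*c3^2*c6 + c1^2*c3^2*c4 + 2*c1^2*c2*c5*c6 + c1^2*c2*c5^2 + 2*c1^2*c2*c4*c6 + 2*c1^2*c2*c4*c5 + 2*c1^2*c2*c3*c6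 + 2*c1^2*c2*c3*c5 + 2*c1^2*c2*c3*c4 + c1^2*c2*c3^2 + c1^2*c2^2*c6 + c1^2*c2^2*c5 + c1^2*c2^2*c3" using nn by (intro add_nonneg_nonneg mult_nonneg_nonneg zero_le_power; simp)
  have T2: "T^2 > 0" using Tp by simp
  have "((r1 + r2 + r3 + r4 + r5 + r6) - 3 * (1/4 * (c1 * r1^2 + c2 * r2^2 + c3 * r3^2 + c4 * r4^2 + c5 * r5^2 + c6 * r6^2) + 3/4 * (c1 * (0 - r1)^2 + c2 * (0 - r2)^2 + c3 * (0 - r3)^2 + c4 * (r1 - r2)^2 + c5 * (r1 - r3)^2 + c6 * (r2 - r3)^2))) * T^2 = ((r1 + r2 + r3 + r4 + r5 + r6) * T) * T - 3 * ((1/4 * (c1 * r1^2 + c2 * r2^2 + c3 * r3^2 + c4 * r4^2 + c5 * r5^2 + c6 * r6^2) + 3/4 * (c1 * (0 - r1)^2 + c2 * (0 - r2)^2 + c3 * (0 - r3)^2 + c4 * (r1 - r2)^2 + c5 * (r1 - r3)^2 + c6 * (r2 - r3)^2)) * T^2)"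
    by (simp add: algebra_simps power2_eq_square)
  also have "\<dots> = T * (f1 + f2 + f3 + f4 + f5 + f6) - 3 * (1/4 * (c1 * f1^2 + c2 * f2^2 + c3 * f3^2 + c4 * f4^2 + c5 * f5^2 + c6 * f6^2) + 3/4 * (c1 * (0 - f1)^2 + c2 * (0 - f2)^2 + c3 * (0 - f3)^2 + c4 * (f1 - f2)^2 + c5 * (f1 - f3)^2 + c6 * (f2 - f3)^2))" unfolding s1 by (simp add: mult.commute)
  finally
  have a: "0 \<le> ((r1 + r2 + r3 + r4 + r5 + r6) - 3 * (1/4 * (c1 * r1^2 + c2 * r2^2 + c3 * r3^2 + c4 * r4^2 + c5 * r5^2 + c6 * r6^2) + 3/4 * (c1 * (0 - r1)^2 + c2 * (0 - r2)^2 + c3 * (0 - r3)^2 + c4 * (r1 - r2)^2 + c5 * (r1 - r3)^2 + c6 * (r2 - r3)^2))) * T^2" using s2(1) p3 by simp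
  have "(4 * (1/4 * (c1 * r1^2 + c2 * r2^2 + c3 * r3^2 + c4 * r4^2 + c5 * r5^2 + c6 * r6^2) + 3/4 * (c1 * (0 - r1)^2 + c2 * (0 - r2)^2 + c3 * (0 - r3)^2 + c4 * (r1 - r2)^2 + c5 * (r1 - r3)^2 + c6 * (r2 - r3)^2)) - (r1 + r2 + r3 + r4 + r5 + r6)) * T^2 = 4 * ((1/4 * (c1 * r1^2 + c2 * r2^2 + c3 * r3^2 + c4 * r4^2 + c5 * r5^2 + c6 * r6^2) + 3/4 * (c1 * (0 - r1)^2 + c2 * (0 - r2)^2 + c3 * (0 - r3)^2 + c4 * (r1 - r2)^2 + c5 * (r1 - r3)^2 + c6 * (r2 - r3)^2)) * T^2) - ((r1 + r2 + r3 + r4 + r5 + r6) * T) * T"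
    by (simp add: algebra_simps power2_eq_square)
  also have "\<dots> = 4 * (1/4 * (c1 * f1^2 + c2 * f2^2 + c3 * f3^2 + c4 * f4^2 + c5 * f5^2 + c6 * f6^2) + 3/4 * (c1 * (0 - f1)^2 + c2 * (0 - f2)^2 + c3 * (0 - f3)^2 + c4 * (f1 - f2)^2 + c5 * (f1 - f3)^2 + c6 * (f2 - f3)^2)) - T * (f1 + f2 + f3 + f4 + f5 + f6)" unfolding s1 by (simp add: mult.commute)
  finally
  have b: "0 \<le> (4 * (1/4 * (c1 * r1^2 + c2 * r2^2 + c3 * r3^2 + c4 * r4^2 + c5 * r5^2 + c6 * r6^2) + 3/4 * (c1 * (0 - r1)^2 + c2 * (0 - r2)^2 + c3 * (0 - r3)^2 + c4 * (r1 - r2)^2 + c5 * (r1 - r3)^2 + c6 * (r2 - r3)^2)) - (r1 + r2 + r3 + r4 + r5 + r6)) * T^2" using s2(2) p4 by simp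
  from a b T2 show ?thesis by (simp add: zero_le_mult_iff)
qed

lemma group4:
  fixes g :: "'v \<Rightarrow> 'v \<Rightarrow> real"
  assumes "edges_in V E" "V = {A,B,C,D}" "distinct [A,B,C,D]"
   "g B A = g A B" "g C A = g A C" "g D A = g A D" "g C B = g B C" "g D B = g B D" "g D C = g C D"
   "g A A = 0" "g B B = 0" "g C C = 0" "g D D = 0"
  shows "sum_list (map (\<lambda>(x,y,l). g x y / l) E) = cond E A B * g A B + cond E A C * g A C + cond E A D * g A D
     + cond E B C * g B C + cond E B D * g B D + cond E C D * g C D"
  using assms(1)
proof (induction E)
  case Nil then show ?case by simp
next
  case (Cons e E)
  obtain x y l where e: "e = (x,y,l)" by (cases e) auto
  have xy: "x \<in> {A,B,C,D}" "y \<in> {A,B,C,D}" using Cons.prems e assms(2) by (auto simp: edges_in_def)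
  have IH: "sum_list (map (\<lambda>(x,y,l). g x y / l) E) = cond E A B * g A B + cond E A C * g A C + cond E A D * g A D
     + cond E B C * g B C + cond E B D * g B D + cond E C D * g C D"
    using Cons by (auto simp: edges_in_def)
  have "g x y / l = (if (x = A \<and> y = B) \<or> (x = B \<and> y = A) then 1 / l else 0) * g A B
     + (if (x = A \<and> y = C) \<or> (x = C \<and> y = A) then 1 / l else 0) * g A C
     + (if (x = A \<and> y = D) \<or> (x = D \<and> y = A) then 1 / l else 0) * g A D
     + (if (x = B \<and> y = C) \<or> (x = C \<and> y = B) then 1 / l else 0) * g B C
     + (if (x = B \<and> y = D) \<or> (x = D \<and> y = B) then 1 / l else 0) * g B D
     + (if (x = C \<and> y = D) \<or> (x = D \<and> y = C) then 1 / l else 0) * g C D"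
    using xy assms(3-13) by auto
  then show ?case unfolding e using IH by (simp add: algebra_simps)
qed

lemma sum_edges: "(\<Sum>i<length E. f (ep E i) (eq E i) / elen E i) = sum_list (map (\<lambda>(x,y,l). f x y / l) E)"
  by (simp add: sum_list_sum_nth atLeast0LessThan ep_def eq_def elen_def split_beta)

theorem lemma3p16:
  fixes V :: "'v set" and E :: "'v medges" and p :: 'v
  assumes "metrized_graph V E" and "card V = 4" and "p \<in> V"
  shows "3 * y_inv V E p \<le> Kf V E \<and> Kf V E \<le> 4 * y_inv V E p"
proof -
  have fin: "finite V" and ein: "edges_in V E" and con: "graph_connected V E"
    using assms(1) unfolding metrized_graph_def edges_in_def by auto
  obtain d where d: "d \<in> V" "d \<noteq> p"
  proof -
    have "\<not> V \<subseteq> {p}" using assms(2) card_mono[of "{p}" V] by auto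
    then show ?thesis using that by blast
  qed
  obtain b c where Vd: "V = {p,b,c,d}" "distinct [p,b,c,d]"
    using enum2[OF fin assms(2) assms(3) d(1) d(2)[symmetric]] by blast
  have ex: "\<exists>phi. is_potential V E' z y phi" if tt: "edges_in V E'" "graph_connected V E'" "z \<in> V" "y \<in> V" for E' z y
  proof (cases "z = y")
    case True then show ?thesis using zero_potential[OF tt(3)] by blast
  next
    case False
    obtain B C where "V = {y,B,C,z}" "distinct [y,B,C,z]" using enum2[OF fin assms(2) tt(4,3)] False by metis
    from pot4[OF tt(1,2) this] show ?thesis by blast
  qed
  have esym: "eff_res V E x y = eff_res V E y x" if tt: "x \<in> V" "y \<in> V" for x y
  proof (cases "x = y")
    case False
    obtain B C where "V = {x,B,C,y}" "distinct [x,B,C,y]" using enum2[OF fin assms(2) tt] False by metis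
    from eff_res_sym4[OF ein con this] show ?thesis .
  qed simp
  have ediag: "eff_res V E x x = 0" if "x \<in> V" for x by (rule eff_res_same[OF fin ein con that])
  have identV: "2 * voltage V E v p u - eff_res V E u v = eff_res V E p v - eff_res V E p u" if tt: "u \<in> V" "v \<in> V" for u v
  proof (cases "u = v")
    case True
    then show ?thesis using volt_same[OF fin ein con tt(1)] ediag[OF tt(1)] by simp
  next
    case False
    obtain B C where BC: "V = {u,B,C,v}" "distinct [u,B,C,v]" using enum2[OF fin assms(2) tt] False by metis
    show ?thesis
    proof (cases "p = u \<or> p = v")
      case True
      then show ?thesis using ident4(2,3)[OF ein con BC] esym[OF tt] by auto
    next
      case False
      then obtain C' where "V = {u,p,C',v}" "distinct [u,p,C',v]"
        using enum3[OF fin assms(2) tt(1,2) assms(3)] \<open>u \<noteq> v\<close> by (metis distinct_length_2_or_more distinct_singleton)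
      from ident4(1)[OF ein con this] show ?thesis .
    qed
  qed
  define g1 where "g1 = (\<lambda>x y. (eff_res V E x y)\<^sup>2)"
  define g2 where "g2 = (\<lambda>x y. (eff_res V E p x - eff_res V E p y)\<^sup>2)"
  have pe: "yterm1 V E i = g1 (ep E i) (eq E i) / elen E i \<and> yterm2 V E p i = g2 (ep E i) (eq E i) / elen E i"
    if i: "i < length E" for i
  proof -
    have uv: "ep E i \<in> V" "eq E i \<in> V" using ein nth_mem[OF i] unfolding edges_in_def ep_def eq_def by fastforce+
    note et = edge_terms[OF fin ein con i assms(3) ex[OF edges_in_del[OF ein]]]
    have a: "(voltage V E (eq E i) (ep E i) (ep E i)) = eff_res V E (ep E i) (eq E i)" by (simp add: eff_res_def)
    have "(2 * voltage V E (eq E i) p (ep E i) - voltage V E (eq E i) (ep E i) (ep E i))\<^sup>2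
       = (eff_res V E p (eq E i) - eff_res V E p (ep E i))\<^sup>2"
      unfolding a identV[OF uv] ..
    then show ?thesis using et unfolding a g1_def g2_def by (simp add: power2_commute)
  qed
  have sum1: "(\<Sum>i<length E. yterm1 V E i) = sum_list (map (\<lambda>(x,y,l). g1 x y / l) E)"
    using pe sum_edges[of g1 E] by simp
  have sum2: "(\<Sum>i<length E. yterm2 V E p i) = sum_list (map (\<lambda>(x,y,l). g2 x y / l) E)"
    using pe sum_edges[of g2 E] by simp
  have inV: "p \<in> V" "b \<in> V" "c \<in> V" "d \<in> V" using Vd by auto
  have es: "eff_res V E b p = eff_res V E p b" "eff_res V E c p = eff_res V E p c" "eff_res V E d p = eff_res V E p d" "eff_res V E c b = eff_res V E b c" "eff_res V E d b = eff_res V E b d" "eff_res V E d c = eff_res V E c d" using esym inV by auto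
  have ed: "eff_res V E p p = 0" "eff_res V E b b = 0" "eff_res V E c c = 0" "eff_res V E d d = 0" using ediag inV by auto
  have G1: "sum_list (map (\<lambda>(x,y,l). g1 x y / l) E) = cond E p b * g1 p b + cond E p c * g1 p c + cond E p d * g1 p d
     + cond E b c * g1 b c + cond E b d * g1 b d + cond E c d * g1 c d"
    by (rule group4[OF ein Vd]) (simp_all add: g1_def es ed)
  have G2: "sum_list (map (\<lambda>(x,y,l). g2 x y / l) E) = cond E p b * g2 p b + cond E p c * g2 p c + cond E p d * g2 p d
     + cond E b c * g2 b c + cond E b d * g2 b d + cond E c d * g2 c d"
    by (rule group4[OF ein Vd]) (simp_all add: g2_def es ed power2_commute)
  define c1 where "c1 = cond E p b"
  define c2 where "c2 = cond E p c"
  define c3 where "c3 = cond E p d"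
  define c4 where "c4 = cond E b c"
  define c5 where "c5 = cond E b d"
  define c6 where "c6 = cond E c d"
  have cK: "cond E p b = c1" "cond E b p = c1" "cond E p c = c2" "cond E c p = c2" "cond E p d = c3" "cond E d p = c3" "cond E b c = c4" "cond E c b = c4" "cond E b d = c5" "cond E d b = c5" "cond E c d = c6" "cond E d c = c6" using cond_sym unfolding c1_def c2_def c3_def c4_def c5_def c6_def by metis+
  have nn: "0 \<le> c1" "0 \<le> c2" "0 \<le> c3" "0 \<le> c4" "0 \<le> c5" "0 \<le> c6"
    unfolding c1_def c2_def c3_def c4_def c5_def c6_def using cond_nonneg[OF ein] by auto
  have r1: "eff_res V E p b = (c5*c6 + c4*c6 + c4*c5 + c3*c6 + c3*c4 + c2*c6 + c2*c5 + c2*c3) / (c3*c5*c6 + c3*c4*c6 + c3*c4*c5 + c2*c5*c6 + c2*c4*c6 + c2*c4*c5 + c2*c3*c5 + c2*c3*c4 + c1*c5*c6 + c1*c4*c6 + c1*c4*c5 + c1*c3*c6 + c1*c3*c4 + c1*c2*c6 + c1*c2*c5 + c1*c2*c3)"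
  proof -
    have "V = {p,c,d,b}" "distinct [p,c,d,b]" using Vd by auto
    from volt4(1)[OF ein con this] have "voltage V E b p p = FA (cond E) p c d b / T4 (cond E) p c d b" .
    moreover have "FA (cond E) p c d b = c5*c6 + c4*c6 + c4*c5 + c3*c6 + c3*c4 + c2*c6 + c2*c5 + c2*c3" unfolding FA_def cK by (simp add: algebra_simps power2_eq_square)
    moreover have "T4 (cond E) p c d b = c3*c5*c6 + c3*c4*c6 + c3*c4*c5 + c2*c5*c6 + c2*c4*c6 + c2*c4*c5 + c2*c3*c5 + c2*c3*c4 + c1*c5*c6 + c1*c4*c6 + c1*c4*c5 + c1*c3*c6 + c1*c3*c4 + c1*c2*c6 + c1*c2*c5 + c1*c2*c3" unfolding T4_def cK by (simp add: algebra_simps power2_eq_square)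
    ultimately show ?thesis by (simp add: eff_res_def)
  qed
  have r2: "eff_res V E p c = (c5*c6 + c4*c6 + c4*c5 + c3*c5 + c3*c4 + c1*c6 + c1*c5 + c1*c3) / (c3*c5*c6 + c3*c4*c6 + c3*c4*c5 + c2*c5*c6 + c2*c4*c6 + c2*c4*c5 + c2*c3*c5 + c2*c3*c4 + c1*c5*c6 + c1*c4*c6 + c1*c4*c5 + c1*c3*c6 + c1*c3*c4 + c1*c2*c6 + c1*c2*c5 + c1*c2*c3)"
  proof -
    have "V = {p,b,d,c}" "distinct [p,b,d,c]" using Vd by auto
    from volt4(1)[OF ein con this] have "voltage V E c p p = FA (cond E) p b d c / T4 (cond E) p b d c" .
    moreover have "FA (cond E) p b d c = c5*c6 + c4*c6 + c4*c5 + c3*c5 + c3*c4 + c1*c6 + c1*c5 + c1*c3" unfolding FA_def cK by (simp add: algebra_simps power2_eq_square)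
    moreover have "T4 (cond E) p b d c = c3*c5*c6 + c3*c4*c6 + c3*c4*c5 + c2*c5*c6 + c2*c4*c6 + c2*c4*c5 + c2*c3*c5 + c2*c3*c4 + c1*c5*c6 + c1*c4*c6 + c1*c4*c5 + c1*c3*c6 + c1*c3*c4 + c1*c2*c6 + c1*c2*c5 + c1*c2*c3" unfolding T4_def cK by (simp add: algebra_simps power2_eq_square)
    ultimately show ?thesis by (simp add: eff_res_def)
  qed
  have r3: "eff_res V E p d = (c5*c6 + c4*c6 + c4*c5 + c2*c5 + c2*c4 + c1*c6 + c1*c4 + c1*c2) / (c3*c5*c6 + c3*c4*c6 + c3*c4*c5 + c2*c5*c6 + c2*c4*c6 + c2*c4*c5 + c2*c3*c5 + c2*c3*c4 + c1*c5*c6 + c1*c4*c6 + c1*c4*c5 + c1*c3*c6 + c1*c3*c4 + c1*c2*c6 + c1*c2*c5 + c1*c2*c3)"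
  proof -
    have "V = {p,b,c,d}" "distinct [p,b,c,d]" using Vd by auto
    from volt4(1)[OF ein con this] have "voltage V E d p p = FA (cond E) p b c d / T4 (cond E) p b c d" .
    moreover have "FA (cond E) p b c d = c5*c6 + c4*c6 + c4*c5 + c2*c5 + c2*c4 + c1*c6 + c1*c4 + c1*c2" unfolding FA_def cK by (simp add: algebra_simps power2_eq_square)
    moreover have "T4 (cond E) p b c d = c3*c5*c6 + c3*c4*c6 + c3*c4*c5 + c2*c5*c6 + c2*c4*c6 + c2*c4*c5 + c2*c3*c5 + c2*c3*c4 + c1*c5*c6 + c1*c4*c6 + c1*c4*c5 + c1*c3*c6 + c1*c3*c4 + c1*c2*c6 + c1*c2*c5 + c1*c2*c3" unfolding T4_def cK by (simp add: algebra_simps power2_eq_square)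
    ultimately show ?thesis by (simp add: eff_res_def)
  qed
  have r4: "eff_res V E b c = (c3*c6 + c3*c5 + c2*c6 + c2*c5 + c2*c3 + c1*c6 + c1*c5 + c1*c3) / (c3*c5*c6 + c3*c4*c6 + c3*c4*c5 + c2*c5*c6 + c2*c4*c6 + c2*c4*c5 + c2*c3*c5 + c2*c3*c4 + c1*c5*c6 + c1*c4*c6 + c1*c4*c5 + c1*c3*c6 + c1*c3*c4 + c1*c2*c6 + c1*c2*c5 + c1*c2*c3)"
  proof -
    have "V = {b,p,d,c}" "distinct [b,p,d,c]" using Vd by auto
    from volt4(1)[OF ein con this] have "voltage V E c b b = FA (cond E) b p d c / T4 (cond E) b p d c" .
    moreover have "FA (cond E) b p d c = c3*c6 + c3*c5 + c2*c6 + c2*c5 + c2*c3 + c1*c6 + c1*c5 + c1*c3" unfolding FA_def cK by (simp add: algebra_simps power2_eq_square)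
    moreover have "T4 (cond E) b p d c = c3*c5*c6 + c3*c4*c6 + c3*c4*c5 + c2*c5*c6 + c2*c4*c6 + c2*c4*c5 + c2*c3*c5 + c2*c3*c4 + c1*c5*c6 + c1*c4*c6 + c1*c4*c5 + c1*c3*c6 + c1*c3*c4 + c1*c2*c6 + c1*c2*c5 + c1*c2*c3" unfolding T4_def cK by (simp add: algebra_simps power2_eq_square)
    ultimately show ?thesis by (simp add: eff_res_def)
  qed
  have r5: "eff_res V E b d = (c3*c6 + c3*c4 + c2*c6 + c2*c4 + c2*c3 + c1*c6 + c1*c4 + c1*c2) / (c3*c5*c6 + c3*c4*c6 + c3*c4*c5 + c2*c5*c6 + c2*c4*c6 + c2*c4*c5 + c2*c3*c5 + c2*c3*c4 + c1*c5*c6 + c1*c4*c6 + c1*c4*c5 + c1*c3*c6 + c1*c3*c4 + c1*c2*c6 + c1*c2*c5 + c1*c2*c3)"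
  proof -
    have "V = {b,p,c,d}" "distinct [b,p,c,d]" using Vd by auto
    from volt4(1)[OF ein con this] have "voltage V E d b b = FA (cond E) b p c d / T4 (cond E) b p c d" .
    moreover have "FA (cond E) b p c d = c3*c6 + c3*c4 + c2*c6 + c2*c4 + c2*c3 + c1*c6 + c1*c4 + c1*c2" unfolding FA_def cK by (simp add: algebra_simps power2_eq_square)
    moreover have "T4 (cond E) b p c d = c3*c5*c6 + c3*c4*c6 + c3*c4*c5 + c2*c5*c6 + c2*c4*c6 + c2*c4*c5 + c2*c3*c5 + c2*c3*c4 + c1*c5*c6 + c1*c4*c6 + c1*c4*c5 + c1*c3*c6 + c1*c3*c4 + c1*c2*c6 + c1*c2*c5 + c1*c2*c3" unfolding T4_def cK by (simp add: algebra_simps power2_eq_square)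
    ultimately show ?thesis by (simp add: eff_res_def)
  qed
  have r6: "eff_res V E c d = (c3*c5 + c3*c4 + c2*c5 + c2*c4 + c1*c5 + c1*c4 + c1*c3 + c1*c2) / (c3*c5*c6 + c3*c4*c6 + c3*c4*c5 + c2*c5*c6 + c2*c4*c6 + c2*c4*c5 + c2*c3*c5 + c2*c3*c4 + c1*c5*c6 + c1*c4*c6 + c1*c4*c5 + c1*c3*c6 + c1*c3*c4 + c1*c2*c6 + c1*c2*c5 + c1*c2*c3)"
  proof -
    have "V = {c,p,b,d}" "distinct [c,p,b,d]" using Vd by auto
    from volt4(1)[OF ein con this] have "voltage V E d c c = FA (cond E) c p b d / T4 (cond E) c p b d" .
    moreover have "FA (cond E) c p b d = c3*c5 + c3*c4 + c2*c5 + c2*c4 + c1*c5 + c1*c4 + c1*c3 + c1*c2" unfolding FA_def cK by (simp add: algebra_simps power2_eq_square)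
    moreover have "T4 (cond E) c p b d = c3*c5*c6 + c3*c4*c6 + c3*c4*c5 + c2*c5*c6 + c2*c4*c6 + c2*c4*c5 + c2*c3*c5 + c2*c3*c4 + c1*c5*c6 + c1*c4*c6 + c1*c4*c5 + c1*c3*c6 + c1*c3*c4 + c1*c2*c6 + c1*c2*c5 + c1*c2*c3" unfolding T4_def cK by (simp add: algebra_simps power2_eq_square)
    ultimately show ?thesis by (simp add: eff_res_def)
  qed
  have Tp: "0 < c3*c5*c6 + c3*c4*c6 + c3*c4*c5 + c2*c5*c6 + c2*c4*c6 + c2*c4*c5 + c2*c3*c5 + c2*c3*c4 + c1*c5*c6 + c1*c4*c6 + c1*c4*c5 + c1*c3*c6 + c1*c3*c4 + c1*c2*c6 + c1*c2*c5 + c1*c2*c3"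
  proof -
    have "0 < T4 (cond E) p b c d" by (rule T4_conn[OF ein con Vd])
    moreover have "T4 (cond E) p b c d = c3*c5*c6 + c3*c4*c6 + c3*c4*c5 + c2*c5*c6 + c2*c4*c6 + c2*c4*c5 + c2*c3*c5 + c2*c3*c4 + c1*c5*c6 + c1*c4*c6 + c1*c4*c5 + c1*c3*c6 + c1*c3*c4 + c1*c2*c6 + c1*c2*c5 + c1*c2*c3" unfolding T4_def cK by (simp add: algebra_simps power2_eq_square)
    ultimately show ?thesis by simp
  qed
  have yv: "y_inv V E p = 1/4 * (c1 * (eff_res V E p b)^2 + c2 * (eff_res V E p c)^2 + c3 * (eff_res V E p d)^2 + c4 * (eff_res V E b c)^2 + c5 * (eff_res V E b d)^2 + c6 * (eff_res V E c d)^2) + 3/4 * (c1 * (0 - (eff_res V E p b))^2 + c2 * (0 - (eff_res V E p c))^2 + c3 * (0 - (eff_res V E p d))^2 + c4 * ((eff_res V E p b) - (eff_res V E p c))^2 + c5 * ((eff_res V E p b) - (eff_res V E p d))^2 + c6 * ((eff_res V E p c) - (eff_res V E p d))^2)"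
    unfolding y_inv_def sum1 sum2 unfolding G1 G2 unfolding g1_def g2_def cK ed by (simp add: power2_commute)
  have kv: "Kf V E = (eff_res V E p b) + (eff_res V E p c) + (eff_res V E p d) + (eff_res V E b c) + (eff_res V E b d) + (eff_res V E c d)"
    unfolding Kf_def using Vd es ed by (simp add: algebra_simps)
  have fi: "3 * (1/4 * (c1 * (eff_res V E p b)^2 + c2 * (eff_res V E p c)^2 + c3 * (eff_res V E p d)^2 + c4 * (eff_res V E b c)^2 + c5 * (eff_res V E b d)^2 + c6 * (eff_res V E c d)^2) + 3/4 * (c1 * (0 - (eff_res V E p b))^2 + c2 * (0 - (eff_res V E p c))^2 + c3 * (0 - (eff_res V E p d))^2 + c4 * ((eff_res V E p b) - (eff_res V E p c))^2 + c5 * ((eff_res V E p b) - (eff_res V E p d))^2 + c6 * ((eff_res V E p c) - (eff_res V E p d))^2)) \<le> (eff_res V E p b) + (eff_res V E p c) + (eff_res V E p d) + (eff_res V E b c) + (eff_res V E b d) + (eff_res V E c d) \<and> (eff_res V E p b) + (eff_res V E p c) + (eff_res V E p d) + (eff_res V E b c) + (eff_res V E b d) + (eff_res V E c d) \<le> 4 * (1/4 * (c1 * (eff_res V E p b)^2 + c2 * (eff_res V E p c)^2 + c3 * (eff_res V E p d)^2 + c4 * (eff_res V E b c)^2 + c5 * (eff_res V E b d)^2 + c6 * (eff_res V E c d)^2) + 3/4 * (c1 * (0 - (eff_res V E p b))^2 + c2 * (0 - (eff_res V E p c))^2 + c3 * (0 - (eff_res V E p d))^2 + c4 * ((eff_res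 V E p b) - (eff_res V E p c))^2 + c5 * ((eff_res V E p b) - (eff_res V E p d))^2 + c6 * ((eff_res V E p c) - (eff_res V E p d))^2))"
    by (rule final_ineq[OF nn Tp r1 r2 r3 r4 r5 r6 refl refl refl refl refl refl refl])
  show ?thesis unfolding yv kv by (rule fi)
qed

end
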